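(* Let $t$, $l$, $n$ be positive integers with $t \geq 2l$, and put $t' = [t/l]$. Then for every integer $p > \frac{t'n-1}{t'-1}$ we have $R_{t-l,t}(K_{1,n}) \leq p$.
   Context: $[a]$ denotes the integer part (floor) of a real number $a$. $K_{1,n}$ is the star with $n$ edges. For a graph $G$ and integers $1 \leq s < t$, $R_{s,t}(G)$ is the smallest positive integer $N$ such that every coloring of the edges of the complete graph $K_N$ with $t$ colors contains a (not necessarily induced) subgraph isomorphic to $G$ whose edges use at most $s$ distinct colors. *)

theory Defs
  imports Complex_Main
begin

text \<open>The complete graph K_N has vertex set {..<N} and all 2-subsets as edges.\<close>

definition edge_colouring :: "nat \<Rightarrow> nat \<Rightarrow> (nat set \<Rightarrow> nat) \<Rightarrow> bool" where
  "edge_colouring N t c \<longleftrightarrow> (\<forall>e. e \<subseteq> {..<N} \<and> card e = 2 \<longrightarrow> c e < t)"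

definition has_s_coloured_copy ::
    "nat \<Rightarrow> 'a set \<Rightarrow> 'a set set \<Rightarrow> nat \<Rightarrow> (nat set \<Rightarrow> nat) \<Rightarrow> bool" where
  "has_s_coloured_copy s V E N c \<longleftrightarrow>
     (\<exists>f. inj_on f V \<and> f ` V \<subseteq> {..<N} \<and> card ((\<lambda>e. c (f ` e)) ` E) \<le> s)"

definition ramsey_prop :: "nat \<Rightarrow> nat \<Rightarrow> 'a set \<Rightarrow> 'a set set \<Rightarrow> nat \<Rightarrow> bool" where
  "ramsey_prop s t V E N \<longleftrightarrow>
     (\<forall>c. edge_colouring N t c \<longrightarrow> has_s_coloured_copy s V E N c)"

definition R_st :: "nat \<Rightarrow> nat \<Rightarrow> 'a set \<Rightarrow> 'a set set \<Rightarrow> nat" where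
  "R_st s t V E = (LEAST N. N > 0 \<and> ramsey_prop s t V E N)"

definition star_V :: "nat \<Rightarrow> nat set" where
  "star_V n = {0..n}"

definition star_E :: "nat \<Rightarrow> nat set set" where
  "star_E n = {{0, i} | i. i \<in> {1..n}}"

end

theory Submission
  imports Defs
begin

lemma main_prop:
  fixes t l n N :: nat
  assumes l: "l > 0" and tl: "2 \<le> t div l" and n: "n > 0"
    and key: "(t div l) * (n - 1) < (N - 1) * (t div l - 1)" and N: "N > 0"
  shows "ramsey_prop (t - l) t (star_V n) (star_E n) N"
  unfolding ramsey_prop_def
proof (intro allI impI)
  fix c assume col: "edge_colouring N t c"
  define T where "T = t div l"
  define g where "g i = c {0, i}" for i :: nat
  define A where "A j = {i\<in>{1..<N}. g i div l = j}" for j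
  have Tl: "T * l \<le> t" unfolding T_def by (metis div_mult_self1_is_m l mult.commute times_div_less_eq_dividend)
  have gt: "g i < t" if "i \<in> {1..<N}" for i
  proof -
    have "{0, i} \<subseteq> {..<N}" "card {0,i} = 2" using that by auto
    thus ?thesis using col unfolding edge_colouring_def g_def by blast
  qed
  have sumle: "(\<Sum>j<T. card (A j)) \<le> N - 1"
  proof -
    have "(\<Sum>j<T. card (A j)) = card (\<Union>j<T. A j)"
      by (rule card_UN_disjoint[symmetric]) (auto simp: A_def)
    also have "\<dots> \<le> card {1..<N}" by (rule card_mono) (auto simp: A_def)
    finally show ?thesis by simp
  qed
  have "\<exists>j<T. T * card (A j) \<le> N - 1"
  proof (rule ccontr)
    assume "\<not> ?thesis"
    hence "\<forall>j<T. N - 1 < T * card (A j)" by auto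
    hence "(\<Sum>j<T. N - 1) < (\<Sum>j<T. T * card (A j))"
      using tl T_def by (intro sum_strict_mono) (auto simp: lessThan_empty_iff)
    hence "T * (N - 1) < T * (\<Sum>j<T. card (A j))" by (simp add: sum_distrib_left)
    with sumle show False by (meson mult_le_mono2 not_le)
  qed
  then obtain j0 where j0: "j0 < T" "T * card (A j0) \<le> N - 1" by blast
  define S where "S = {i\<in>{1..<N}. g i div l \<noteq> j0}"
  have part: "card S + card (A j0) = N - 1"
  proof -
    have "card S + card (A j0) = card (S \<union> A j0)"
      by (rule card_Un_disjoint[symmetric]) (auto simp: S_def A_def)
    also have "S \<union> A j0 = {1..<N}" by (auto simp: S_def A_def)
    finally show ?thesis by simp
  qed
  have "T * (n - 1) < T * card S"
  proof -
    have "T * (N - 1) = T * card S + T * card (A j0)" using part by (metis add_mult_distrib2)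
    hence "T * card S \<ge> T * (N-1) - (N - 1)" using j0 by linarith
    also have "T * (N-1) - (N-1) = (N-1) * (T - 1)" by (simp add: algebra_simps diff_mult_distrib)
    finally show ?thesis using key unfolding T_def[symmetric] by linarith
  qed
  hence cS: "n \<le> card S" using n by auto
  have finS: "finite S" by (simp add: S_def)
  obtain S' where S': "S' \<subseteq> S" "card S' = n"
    using cS by (meson obtain_subset_with_card_n)
  have finS': "finite S'" using S' finS finite_subset by blast
  have "card {1..n} = card S'" using S' by simp
  then obtain h where h: "bij_betw h {1..n} S'"
    using finS' by (metis finite_atLeastAtMost finite_same_card_bij)
  define f where "f i = (if i = 0 then 0 else h i)" for i
  define K where "K = {..<t} - {j0*l..<j0*l+l}"
  have blk: "{j0*l..<j0*l+l} \<subseteq> {..<t}"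
  proof -
    have "j0 + 1 \<le> T" using j0(1) by simp
    hence "(j0 + 1) * l \<le> T * l" by (rule mult_right_mono) simp
    hence "j0 * l + l \<le> t" using Tl by (simp add: algebra_simps)
    thus ?thesis by auto
  qed
  have cK: "card K = t - l" unfolding K_def using blk by (simp add: card_Diff_subset)
  have gS: "g ` S \<subseteq> K"
  proof
    fix x assume "x \<in> g ` S"
    then obtain i where i: "i \<in> S" "x = g i" by auto
    have "x < t" using i gt by (auto simp: S_def)
    moreover have "x div l \<noteq> j0" using i by (auto simp: S_def)
    moreover have "x \<notin> {j0*l..<j0*l+l}" if "x div l \<noteq> j0"
    proof
      assume "x \<in> {j0*l..<j0*l+l}"
      hence "j0 * l \<le> x" "x < (j0 + 1) * l" by auto
      hence "x div l = j0" by (intro div_nat_eqI) (simp_all add: mult.commute)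
      with that show False by simp
    qed
    ultimately show "x \<in> K" by (auto simp: K_def)
  qed
  have hS: "h i \<in> S'" if "i \<in> {1..n}" for i using h that bij_betwE by blast
  have S0: "0 \<notin> S" by (simp add: S_def)
  show "has_s_coloured_copy (t - l) (star_V n) (star_E n) N c"
    unfolding has_s_coloured_copy_def
  proof (intro exI conjI)
    show "inj_on f (star_V n)"
    proof (rule inj_onI)
      fix x y assume xy: "x \<in> star_V n" "y \<in> star_V n" "f x = f y"
      have hinj: "inj_on h {1..n}" using h by (simp add: bij_betw_def)
      have hn0: "h i \<noteq> 0" if "i \<in> {1..n}" for i
      proof
        assume e: "h i = 0"
        have m: "h i \<in> S" by (rule subsetD[OF S'(1) hS[OF that]])
        from m show False unfolding e using S0 by contradiction
      qed
      show "x = y"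
      proof (cases "x = 0"; cases "y = 0")
        assume "x = 0" "y = 0" thus "x = y" by simp
      next
        assume a: "x = 0" "y \<noteq> 0"
        hence y1: "y \<in> {1..n}" using xy(2) by (auto simp: star_V_def)
        have "f y = h y" using a(2) unfolding f_def by simp
        moreover have "f x = 0" using a(1) unfolding f_def by simp
        ultimately have "h y = 0" using xy(3) by simp
        with hn0[OF y1] show "x = y" by contradiction
      next
        assume a: "x \<noteq> 0" "y = 0"
        hence x1: "x \<in> {1..n}" using xy(1) by (auto simp: star_V_def)
        have "f x = h x" using a(1) unfolding f_def by simp
        moreover have "f y = 0" using a(2) unfolding f_def by simp
        ultimately have "h x = 0" using xy(3) by simp
        with hn0[OF x1] show "x = y" by contradiction
      next
        assume a: "x \<noteq> 0" "y \<noteq> 0"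
        hence x1: "x \<in> {1..n}" and y1: "y \<in> {1..n}" using xy(1,2) by (auto simp: star_V_def)
        have "f x = h x" using a(1) unfolding f_def by simp
        moreover have "f y = h y" using a(2) unfolding f_def by simp
        ultimately have "h x = h y" using xy(3) by simp
        thus "x = y" using x1 y1 by (rule inj_onD[OF hinj])
      qed
    qed
    show "f ` star_V n \<subseteq> {..<N}"
    proof
      fix y assume "y \<in> f ` star_V n"
      then obtain x where x: "x \<in> star_V n" "y = f x" by auto
      show "y \<in> {..<N}"
      proof (cases "x = 0")
        case True thus ?thesis using x N by (simp add: f_def)
      next
        case False thus ?thesis using x hS[of x] S' by (auto simp: f_def star_V_def S_def)
      qed
    qed
    have sub: "(\<lambda>e. c (f ` e)) ` star_E n \<subseteq> g ` S'"
    proof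
      fix y assume "y \<in> (\<lambda>e. c (f ` e)) ` star_E n"
      then obtain i where i: "i \<in> {1..n}" "y = c (f ` {0, i})" by (auto simp: star_E_def)
      hence "y = g (h i)" by (simp add: f_def g_def insert_commute)
      thus "y \<in> g ` S'" using hS[OF i(1)] by auto
    qed
    have "card ((\<lambda>e. c (f ` e)) ` star_E n) \<le> card (g ` S')"
      by (rule card_mono) (auto simp: finS' sub)
    also have "\<dots> \<le> card K"
      by (rule card_mono) (use gS S' in \<open>auto simp: K_def\<close>)
    finally show "card ((\<lambda>e. c (f ` e)) ` star_E n) \<le> t - l" using cK by simp
  qed
qed

theorem theorem1:
  fixes t l n :: nat and p :: int
  assumes "t > 0" and "l > 0" and "n > 0" and "t \<ge> 2 * l"
    and "real_of_int p > (real (t div l) * real n - 1) / (real (t div l) - 1)"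
  shows "int (R_st (t - l) t (star_V n) (star_E n)) \<le> p"
proof -
  define T where "T = t div l"
  have T2: "T \<ge> 2" unfolding T_def using assms
    by (metis div_le_mono nonzero_mult_div_cancel_right not_gr0)
  have hp: "real_of_int p > (real T * real n - 1) / (real T - 1)" using assms(5) T_def by simp
  have "real T - 1 > 0" using T2 by simp
  hence "real_of_int p * (real T - 1) > real T * real n - 1"
    using hp by (simp add: pos_divide_less_eq)
  hence "of_int (p * (int T - 1)) > (of_int (int T * int n - 1) :: real)" by simp
  hence ineq: "p * (int T - 1) \<ge> int T * int n" by linarith
  have pn: "p > int n"
  proof (rule ccontr)
    assume "\<not> ?thesis" hence "p \<le> int n" by simp
    hence "p * (int T - 1) \<le> int n * (int T - 1)" using T2 by (intro mult_right_mono) auto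
    with ineq have "int T * int n \<le> int n * (int T - 1)" by linarith
    thus False using assms(3) by (simp add: algebra_simps)
  qed
  define N where "N = nat p"
  have Np: "int N = p" using pn N_def by simp
  have N0: "N > 0" using pn N_def by simp
  have key: "T * (n - 1) < (N - 1) * (T - 1)"
  proof -
    have "int ((N - 1) * (T - 1)) = (p - 1) * (int T - 1)" using N0 T2 Np by (simp add: of_nat_diff)
    moreover have "int (T * (n - 1)) = int T * int n - int T" using assms(3) by (simp add: of_nat_diff algebra_simps)
    moreover have "(p - 1) * (int T - 1) = p * (int T - 1) - int T + 1" by (simp add: algebra_simps)
    ultimately have "int (T * (n - 1)) < int ((N - 1) * (T - 1))" using ineq by linarith
    thus ?thesis by linarith
  qed
  have "ramsey_prop (t - l) t (star_V n) (star_E n) N"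
    by (rule main_prop) (use assms T2 key N0 in \<open>auto simp: T_def\<close>)
  hence "R_st (t - l) t (star_V n) (star_E n) \<le> N"
    unfolding R_st_def using N0 by (intro Least_le) auto
  thus ?thesis using Np by linarith
qed

end
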